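(* Let a sequence $b_1,b_2,\dots$ be encoded by a causal linear time-invariant code that is $(R,\beta)$-anytime reliable (with $d_o=0$) over the packet erasure channel, and decoded by the erasure decoder, as described in the context. Let $1\le\tau_1'\le\tau_1<\tau_2'\le\tau_2$ be integers (so the intervals $[\tau_1',\tau_1]$ and $[\tau_2',\tau_2]$ are disjoint). Then $$P\big(Y(\tau_1',\tau_1)\cap Y(\tau_2',\tau_2)\big)\le 2^{-\beta\left((\tau_1-\tau_1'+1)+(\tau_2-\tau_2'+1)\right)},$$ where the probability is over the channel erasures only.
   Context: Packets are elements of $\mathbb F_2^{\Lambda}$. A causal linear time-invariant code maps information blocks $b_t\in\mathbb F_2^{a}$ ($t\ge1$) to channel blocks $c_t=G_1b_t+G_2b_{t-1}+\dots+G_tb_1\in\mathbb F_2^{n\Lambda}$, consisting of $n$ packets, with fixed matrices $G_i$ over $\mathbb F_2$. Each transmitted packet is independently erased with probability $p$ and otherwise received correctly. At each time $t$ the decoder, using all unerased packets received up to time $t$, produces estimates $\hat b_{\tau|t}$, $1\le\tau\le t$: $\hat b_{\tau|t}=b_\tau$ if $b_\tau$ is uniquely determined by the received packets (i.e. it takes the same value in every input sequence consistent with them), and otherwise $\hat b_{\tau|t}$ is declared an erasure (counted as $\hat b_{\tau|t}\neq b_\tau$). The code is $(R,\beta)$-anytime reliable (with $d_o=0$) if for every input sequence and all $1\le\tau\le t$, $P(\hat b_{\tau|t}\ne b_\tau)\le 2^{-\beta(t-\tau+1)}$. For $1\le\tau'\le\tau$, $Y(\tau',\tau)$ denotes the event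 that at decoding time $\tau$ the earliest decoding error is at position $\tau'$: $\hat b_{\ell|\tau}=b_\ell$ for all $\ell<\tau'$ and $\hat b_{\tau'|\tau}\ne b_{\tau'}$. *)

theory Defs
  imports "HOL-Probability.Probability" "HOL-Library.Z2"
begin

text \<open>F_2 is the field type bit. An information sequence is
  b :: nat \<Rightarrow> nat \<Rightarrow> bit, where b t k (t \<ge> 1, k < a) is coordinate k of the block b_t.
  The code is given by G :: nat \<Rightarrow> nat \<Rightarrow> nat \<Rightarrow> bit, where G i r k (i \<ge> 1, r < n*Lambda, k < a)
  is entry (r,k) of the (n Lambda) x a matrix G_i. Packet j (j < n) of channel block c_t
  consists of the rows j*Lambda ..< (j+1)*Lambda. An erasure pattern is
  e :: nat \<times> nat \<Rightarrow> bool, with e (s,j) = True meaning packet j at time s is erased.\<close>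

definition encode :: "(nat \<Rightarrow> nat \<Rightarrow> nat \<Rightarrow> bit) \<Rightarrow> nat \<Rightarrow> nat \<Rightarrow> (nat \<Rightarrow> nat \<Rightarrow> bit) \<Rightarrow> nat \<Rightarrow> bit"
  where "encode G a t b = (\<lambda>r. \<Sum>i\<in>{1..t}. \<Sum>k<a. G i r k * b (t - i + 1) k)"

definition consistent ::
  "(nat \<Rightarrow> nat \<Rightarrow> nat \<Rightarrow> bit) \<Rightarrow> nat \<Rightarrow> nat \<Rightarrow> nat \<Rightarrow> nat \<Rightarrow> (nat \<Rightarrow> nat \<Rightarrow> bit)
     \<Rightarrow> (nat \<times> nat \<Rightarrow> bool) \<Rightarrow> (nat \<Rightarrow> nat \<Rightarrow> bit) \<Rightarrow> bool"
  where "consistent G a n Lambda t b e b' \<longleftrightarrow>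
    (\<forall>s\<in>{1..t}. \<forall>j<n. \<not> e (s, j) \<longrightarrow>
       (\<forall>r\<in>{j * Lambda..<(j + 1) * Lambda}. encode G a s b' r = encode G a s b r))"

text \<open>The erasure decoder at time t outputs b_tau correctly iff b_tau is uniquely
  determined by the received packets.\<close>
definition dec_correct ::
  "(nat \<Rightarrow> nat \<Rightarrow> nat \<Rightarrow> bit) \<Rightarrow> nat \<Rightarrow> nat \<Rightarrow> nat \<Rightarrow> (nat \<Rightarrow> nat \<Rightarrow> bit)
     \<Rightarrow> (nat \<times> nat \<Rightarrow> bool) \<Rightarrow> nat \<Rightarrow> nat \<Rightarrow> bool"
  where "dec_correct G a n Lambda b e tau t \<longleftrightarrow>
    (\<forall>b'. consistent G a n Lambda t b e b' \<longrightarrow> (\<forall>k<a. b' tau k = b tau k))"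

definition erasure_space :: "real \<Rightarrow> (nat \<times> nat \<Rightarrow> bool) measure"
  where "erasure_space p = PiM UNIV (\<lambda>_. measure_pmf (bernoulli_pmf p))"

definition anytime_reliable ::
  "(nat \<Rightarrow> nat \<Rightarrow> nat \<Rightarrow> bit) \<Rightarrow> nat \<Rightarrow> nat \<Rightarrow> nat \<Rightarrow> real \<Rightarrow> real \<Rightarrow> bool"
  where "anytime_reliable G a n Lambda p \<beta> \<longleftrightarrow>
    (\<forall>b tau t. 1 \<le> tau \<and> tau \<le> t \<longrightarrow>
       measure (erasure_space p) {e \<in> space (erasure_space p). \<not> dec_correct G a n Lambda b e tau t}
         \<le> 2 powr (- \<beta> * real (t - tau + 1)))"

definition Y_event ::
  "(nat \<Rightarrow> nat \<Rightarrow> nat \<Rightarrow> bit) \<Rightarrow> nat \<Rightarrow> nat \<Rightarrow> nat \<Rightarrow> (nat \<Rightarrow> nat \<Rightarrow> bit)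
     \<Rightarrow> nat \<Rightarrow> nat \<Rightarrow> (nat \<times> nat \<Rightarrow> bool) set"
  where "Y_event G a n Lambda b tau' tau =
    {e. (\<forall>l. 1 \<le> l \<and> l < tau' \<longrightarrow> dec_correct G a n Lambda b e l tau)
        \<and> \<not> dec_correct G a n Lambda b e tau' tau}"

end

theory Submission
  imports Defs
begin

lemma consistent_dep:
  assumes "\<And>s j. s \<in> {1..t} \<Longrightarrow> j < n \<Longrightarrow> e (s, j) = e' (s, j)"
  shows "consistent G a n Lambda t b e b' = consistent G a n Lambda t b e' b'"
  using assms unfolding consistent_def by auto

lemma dec_dep:
  assumes "\<And>s j. s \<in> {1..t} \<Longrightarrow> j < n \<Longrightarrow> e (s, j) = e' (s, j)"
  shows "dec_correct G a n Lambda b e tau t = dec_correct G a n Lambda b e' tau t"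
proof -
  have "\<And>b'. consistent G a n Lambda t b e b' = consistent G a n Lambda t b e' b'"
    by (rule consistent_dep) (rule assms)
  then show ?thesis unfolding dec_correct_def by simp
qed

lemma encode_early:
  assumes "\<And>l k. 1 \<le> l \<Longrightarrow> l < t2 \<Longrightarrow> k < a \<Longrightarrow> b' l k = b l k" "s < t2"
  shows "encode G a s b' = encode G a s b"
  unfolding encode_def
proof (rule ext, rule sum.cong[OF refl], rule sum.cong[OF refl])
  fix r i k assume "i \<in> {1..s}" "k \<in> {..<a}"
  then show "G i r k * b' (s - i + 1) k = G i r k * b (s - i + 1) k"
    using assms by auto
qed

definition good2 where
  "good2 G a n Lambda b e t2' t2 \<longleftrightarrow>
    (\<forall>b'. (\<forall>l k. 1 \<le> l \<longrightarrow> l < t2' \<longrightarrow> k < a \<longrightarrow> b' l k = b l k)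
       \<and> (\<forall>s\<in>{t2'..t2}. \<forall>j<n. \<not> e (s, j) \<longrightarrow>
       (\<forall>r\<in>{j * Lambda..<(j + 1) * Lambda}. encode G a s b' r = encode G a s b r))
      \<longrightarrow> (\<forall>k<a. b' t2' k = b t2' k))"

lemma good2_dep:
  assumes "\<And>s j. s \<in> {t2'..t2} \<Longrightarrow> j < n \<Longrightarrow> e (s, j) = e' (s, j)"
  shows "good2 G a n Lambda b e t2' t2 = good2 G a n Lambda b e' t2' t2"
  using assms unfolding good2_def by auto

lemma dec_imp_good2:
  assumes "dec_correct G a n Lambda b e t2' t2"
  shows "good2 G a n Lambda b e t2' t2"
  unfolding good2_def
proof (rule allI, rule impI)
  fix b' assume h: "(\<forall>l k. 1 \<le> l \<longrightarrow> l < t2' \<longrightarrow> k < a \<longrightarrow> b' l k = b l k)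
       \<and> (\<forall>s\<in>{t2'..t2}. \<forall>j<n. \<not> e (s, j) \<longrightarrow>
       (\<forall>r\<in>{j * Lambda..<(j + 1) * Lambda}. encode G a s b' r = encode G a s b r))"
  have early: "\<And>l k. 1 \<le> l \<Longrightarrow> l < t2' \<Longrightarrow> k < a \<Longrightarrow> b' l k = b l k" using h by blast
  have "consistent G a n Lambda t2 b e b'"
    unfolding consistent_def
  proof (intro ballI allI impI)
    fix s j r assume s: "s \<in> {1..t2}" and j: "j < n" "\<not> e (s, j)" and r: "r \<in> {j * Lambda..<(j + 1) * Lambda}"
    show "encode G a s b' r = encode G a s b r"
    proof (cases "s < t2'")
      case True
      then show ?thesis using encode_early[OF early True] by simp
    next
      case False
      then show ?thesis using h s j r by auto
    qed
  qed
  then show "\<forall>k<a. b' t2' k = b t2' k" using assms unfolding dec_correct_def by blast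
qed

lemma Y_imp_not_good2:
  assumes "e \<in> Y_event G a n Lambda b t2' t2"
  shows "\<not> good2 G a n Lambda b e t2' t2"
proof
  assume g: "good2 G a n Lambda b e t2' t2"
  have "dec_correct G a n Lambda b e t2' t2"
    unfolding dec_correct_def
  proof (intro allI impI)
    fix b' k assume c: "consistent G a n Lambda t2 b e b'" and k: "k < a"
    have early: "\<And>l k. 1 \<le> l \<Longrightarrow> l < t2' \<Longrightarrow> k < a \<Longrightarrow> b' l k = b l k"
      using assms c unfolding Y_event_def dec_correct_def by blast
    have "\<forall>s\<in>{t2'..t2}. \<forall>j<n. \<not> e (s, j) \<longrightarrow>
       (\<forall>r\<in>{j * Lambda..<(j + 1) * Lambda}. encode G a s b' r = encode G a s b r)"
    proof (intro ballI allI impI)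
      fix s j r assume "s \<in> {t2'..t2}" "j < n" "\<not> e (s, j)" "r \<in> {j * Lambda..<(j + 1) * Lambda}"
      moreover have "s \<ge> 1 \<or> encode G a s b' = encode G a s b"
        by (cases "s = 0") (auto simp: encode_def)
      ultimately show "encode G a s b' r = encode G a s b r"
        using c unfolding consistent_def by force
    qed
    then show "b' t2' k = b t2' k" using g early k unfolding good2_def by blast
  qed
  then show False using assms unfolding Y_event_def by blast
qed

locale era =
  fixes p :: real
  assumes p0: "0 \<le> p" and p1: "p \<le> 1"
begin

abbreviation "N \<equiv> (\<lambda>_::nat\<times>nat. measure_pmf (bernoulli_pmf p))"
abbreviation "MM \<equiv> erasure_space p"

lemma MM_def': "MM = PiM UNIV N" unfolding erasure_space_def by simp

lemma prob: "prob_space MM"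
  unfolding MM_def' by (intro prob_space_PiM) (simp add: measure_pmf.prob_space_axioms)

lemma rv_restrict: "(\<lambda>e. restrict e J) \<in> measurable MM (PiM J N)"
  unfolding MM_def' by (rule measurable_restrict_subset) simp

lemma S_meas:
  assumes "finite J" "S \<subseteq> space (PiM J N)"
  shows "S \<in> sets (PiM J N)"
proof -
  have fin: "finite (space (PiM J N))" using assms(1) by (simp add: space_PiM finite_PiE)
  have finS: "finite S" using finite_subset[OF assms(2) fin] .
  have sing: "{x} \<in> sets (PiM J N)" if "x \<in> S" for x
  proof -
    have "x \<in> extensional J" using that assms(2) by (auto simp: space_PiM PiE_def)
    then have "{x} = PiE J (\<lambda>i. {x i})" by (simp add: PiE_singleton)
    then show ?thesis using assms(1) by (simp add: sets_PiM_I_finite)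
  qed
  have "(\<Union>x\<in>S. {x}) \<in> sets (PiM J N)"
    by (rule sets.finite_UN[OF finS]) (rule sing)
  then show ?thesis by simp
qed

lemma event_as_preimage:
  assumes "finite J" "\<And>e e'. restrict e J = restrict e' J \<Longrightarrow> P e = P e'"
  shows "\<exists>S \<in> sets (PiM J N). {e \<in> space MM. P e} = (\<lambda>e. restrict e J) -` S \<inter> space MM"
proof -
  define S where "S = {x \<in> space (PiM J N). \<exists>e. restrict e J = x \<and> P e}"
  have "S \<in> sets (PiM J N)" unfolding S_def by (rule S_meas[OF assms(1)], rule Collect_restrict)
  moreover have "{e \<in> space MM. P e} = (\<lambda>e. restrict e J) -` S \<inter> space MM"
  proof (intro equalityI subsetI)
    fix e assume "e \<in> {e \<in> space MM. P e}"
    then have e: "e \<in> space MM" "P e" by auto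
    have "restrict e J \<in> space (PiM J N)"
      using measurable_space[OF rv_restrict e(1)] .
    then show "e \<in> (\<lambda>e. restrict e J) -` S \<inter> space MM"
      unfolding S_def using e by blast
  next
    fix e assume "e \<in> (\<lambda>e. restrict e J) -` S \<inter> space MM"
    then obtain e' where "e \<in> space MM" "restrict e' J = restrict e J" "P e'"
      unfolding S_def by auto
    then show "e \<in> {e \<in> space MM. P e}" using assms(2)[of e' e] by simp
  qed
  ultimately show ?thesis by (rule bexI[rotated])
qed

lemma event_meas:
  assumes "finite J" "\<And>e e'. restrict e J = restrict e' J \<Longrightarrow> P e = P e'"
  shows "{e \<in> space MM. P e} \<in> sets MM"
proof -
  from event_as_preimage[OF assms] obtain S where S: "S \<in> sets (PiM J N)" "{e \<in> space MM. P e} = (\<lambda>e. restrict e J) -` S \<inter> space MM"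
    by (rule bexE)
  have "(\<lambda>e. restrict e J) -` S \<inter> space MM \<in> sets MM"
    by (rule measurable_sets[OF rv_restrict S(1)])
  then show ?thesis unfolding S(2) .
qed

lemma indep_coords: "prob_space.indep_vars MM N (\<lambda>i x. x i) UNIV"
proof -
  interpret prob_space MM by (rule prob)
  have rv: "\<And>i. random_variable (N i) (\<lambda>x. x i)"
    unfolding MM_def' by (rule measurable_component_singleton) simp
  have "distr MM (PiM UNIV N) (\<lambda>x. \<lambda>i\<in>UNIV. x i) = PiM UNIV (\<lambda>i. distr MM (N i) (\<lambda>x. x i))"
  proof -
    have "distr MM (PiM UNIV N) (\<lambda>x. \<lambda>i\<in>UNIV. x i) = MM"
      unfolding restrict_UNIV MM_def' by (simp add: distr_id)
    also have "\<dots> = PiM UNIV (\<lambda>i. distr MM (N i) (\<lambda>x. x i))"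
      unfolding MM_def'
      by (rule PiM_cong) (auto intro!: distr_PiM_component[symmetric] simp: measure_pmf.prob_space_axioms)
    finally show ?thesis .
  qed
  then show ?thesis
    apply (rule indep_vars_iff_distr_eq_PiM'[THEN iffD2, rotated 2])
     apply simp
    apply (rule rv)
    done
qed

lemma indep_events:
  assumes "finite J1" "finite J2" "J1 \<inter> J2 = {}"
    and "\<And>e e'. restrict e J1 = restrict e' J1 \<Longrightarrow> P1 e = P1 e'"
    and "\<And>e e'. restrict e J2 = restrict e' J2 \<Longrightarrow> P2 e = P2 e'"
  shows "measure MM ({e \<in> space MM. P1 e} \<inter> {e \<in> space MM. P2 e})
       = measure MM {e \<in> space MM. P1 e} * measure MM {e \<in> space MM. P2 e}"
proof -
  interpret prob_space MM by (rule prob)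
  have iv: "indep_var (PiM J1 N) (\<lambda>e. restrict e J1) (PiM J2 N) (\<lambda>e. restrict e J2)"
    using indep_var_restrict[OF indep_coords assms(3)] by simp
  from event_as_preimage[OF assms(1,4)] obtain S1 where S1: "S1 \<in> sets (PiM J1 N)"
    "{e \<in> space MM. P1 e} = (\<lambda>e. restrict e J1) -` S1 \<inter> space MM"
    by (rule bexE)
  from event_as_preimage[OF assms(2,5)] obtain S2 where S2: "S2 \<in> sets (PiM J2 N)"
    "{e \<in> space MM. P2 e} = (\<lambda>e. restrict e J2) -` S2 \<inter> space MM"
    by (rule bexE)
  have "indep_set
      (sigma_sets (space MM) { (\<lambda>e. restrict e J1) -` A \<inter> space MM | A. A \<in> sets (PiM J1 N)})
      (sigma_sets (space MM) { (\<lambda>e. restrict e J2) -` A \<inter> space MM | A. A \<in> sets (PiM J2 N)})"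
    using iv unfolding indep_var_eq by blast
  moreover have "(\<lambda>e. restrict e J1) -` S1 \<inter> space MM \<in>
      sigma_sets (space MM) { (\<lambda>e. restrict e J1) -` A \<inter> space MM | A. A \<in> sets (PiM J1 N)}"
    using S1(1) by (intro sigma_sets.Basic) blast
  moreover have "(\<lambda>e. restrict e J2) -` S2 \<inter> space MM \<in>
      sigma_sets (space MM) { (\<lambda>e. restrict e J2) -` A \<inter> space MM | A. A \<in> sets (PiM J2 N)}"
    using S2(1) by (intro sigma_sets.Basic) blast
  ultimately show ?thesis
    unfolding S1(2) S2(2) indep_sets2_eq by blast
qed

end

theorem lemma6:
  fixes G :: "nat \<Rightarrow> nat \<Rightarrow> nat \<Rightarrow> bit" and a n Lambda :: nat
    and p \<beta> :: real and b :: "nat \<Rightarrow> nat \<Rightarrow> bit"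
    and tau1' tau1 tau2' tau2 :: nat
  assumes "0 \<le> p" "p \<le> 1"
    and "anytime_reliable G a n Lambda p \<beta>"
    and "1 \<le> tau1'" "tau1' \<le> tau1" "tau1 < tau2'" "tau2' \<le> tau2"
  shows "measure (erasure_space p)
           (space (erasure_space p) \<inter> Y_event G a n Lambda b tau1' tau1 \<inter> Y_event G a n Lambda b tau2' tau2)
         \<le> 2 powr (- \<beta> * (real (tau1 - tau1' + 1) + real (tau2 - tau2' + 1)))"
proof -
  interpret era p using assms(1,2) by unfold_locales
  interpret prob_space MM by (rule prob)
  define J1 where "J1 = {..tau1} \<times> {..<n}"
  define J2 where "J2 = {tau2'..tau2} \<times> {..<n}"
  define J3 where "J3 = {..tau2} \<times> {..<n}"
  have agree: "e x = e' x" if "restrict e J = restrict e' J" "x \<in> J" for e e' :: "nat \<times> nat \<Rightarrow> bool" and J x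
    using fun_cong[OF that(1), of x] that(2) by simp
  define A where "A = {e \<in> space MM. \<not> dec_correct G a n Lambda b e tau1' tau1}"
  define B where "B = {e \<in> space MM. \<not> good2 G a n Lambda b e tau2' tau2}"
  define C where "C = {e \<in> space MM. \<not> dec_correct G a n Lambda b e tau2' tau2}"
  have d1: "(\<not> dec_correct G a n Lambda b e tau1' tau1) = (\<not> dec_correct G a n Lambda b e' tau1' tau1)"
    if "restrict e J1 = restrict e' J1" for e e'
  proof -
    have "\<And>s j. s \<in> {1..tau1} \<Longrightarrow> j < n \<Longrightarrow> e (s, j) = e' (s, j)"
      using agree[OF that] unfolding J1_def by simp
    from dec_dep[where t=tau1 and n=n and e=e and e'=e', OF this] show ?thesis by simp
  qed
  have d2: "(\<not> good2 G a n Lambda b e tau2' tau2) = (\<not> good2 G a n Lambda b e' tau2' tau2)"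
    if "restrict e J2 = restrict e' J2" for e e'
  proof -
    have "\<And>s j. s \<in> {tau2'..tau2} \<Longrightarrow> j < n \<Longrightarrow> e (s, j) = e' (s, j)"
      using agree[OF that] unfolding J2_def by simp
    from good2_dep[of tau2' tau2 n e e', OF this] show ?thesis by simp
  qed
  have d3: "(\<not> dec_correct G a n Lambda b e tau2' tau2) = (\<not> dec_correct G a n Lambda b e' tau2' tau2)"
    if "restrict e J3 = restrict e' J3" for e e'
  proof -
    have "\<And>s j. s \<in> {1..tau2} \<Longrightarrow> j < n \<Longrightarrow> e (s, j) = e' (s, j)"
      using agree[OF that] unfolding J3_def by simp
    from dec_dep[where t=tau2 and n=n and e=e and e'=e', OF this] show ?thesis by simp
  qed
  have ar: "\<And>tau t b. 1 \<le> tau \<and> tau \<le> t \<Longrightarrow>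
       measure MM {e \<in> space MM. \<not> dec_correct G a n Lambda b e tau t}
         \<le> 2 powr (- \<beta> * real (t - tau + 1))"
    using assms(3) unfolding anytime_reliable_def by blast
  have fin: "finite J1" "finite J2" "finite J3" unfolding J1_def J2_def J3_def by auto
  have disj: "J1 \<inter> J2 = {}" unfolding J1_def J2_def using assms(6) by auto
  have Cm: "C \<in> events" unfolding C_def by (rule event_meas[OF fin(3) d3])
  have Am: "A \<in> events" unfolding A_def by (rule event_meas[OF fin(1) d1])
  have Bm: "B \<in> events" unfolding B_def by (rule event_meas[OF fin(2) d2])
  have sub: "space MM \<inter> Y_event G a n Lambda b tau1' tau1 \<inter> Y_event G a n Lambda b tau2' tau2 \<subseteq> A \<inter> B"
  proof
    fix e assume e: "e \<in> space MM \<inter> Y_event G a n Lambda b tau1' tau1 \<inter> Y_event G a n Lambda b tau2' tau2"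
    then have "\<not> good2 G a n Lambda b e tau2' tau2" using Y_imp_not_good2 by blast
    moreover have "\<not> dec_correct G a n Lambda b e tau1' tau1" using e unfolding Y_event_def by blast
    ultimately show "e \<in> A \<inter> B" using e unfolding A_def B_def by blast
  qed
  have "measure MM (space MM \<inter> Y_event G a n Lambda b tau1' tau1 \<inter> Y_event G a n Lambda b tau2' tau2)
      \<le> measure MM (A \<inter> B)"
    using sub Am Bm by (intro finite_measure_mono) auto
  also have "\<dots> = measure MM A * measure MM B"
    unfolding A_def B_def by (rule indep_events[OF fin(1,2) disj d1 d2])
  also have "\<dots> \<le> 2 powr (- \<beta> * real (tau1 - tau1' + 1)) * 2 powr (- \<beta> * real (tau2 - tau2' + 1))"
  proof (rule mult_mono)
    show "measure MM A \<le> 2 powr (- \<beta> * real (tau1 - tau1' + 1))"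
      using ar[of tau1' tau1 b] assms(4,5) unfolding A_def by simp
    have "measure MM B \<le> measure MM C"
      using Cm dec_imp_good2 unfolding B_def C_def by (intro finite_measure_mono) auto
    also have "\<dots> \<le> 2 powr (- \<beta> * real (tau2 - tau2' + 1))"
      using ar[of tau2' tau2 b] assms(4,5,6,7) unfolding C_def by simp
    finally show "measure MM B \<le> 2 powr (- \<beta> * real (tau2 - tau2' + 1))" .
  qed auto
  also have "\<dots> = 2 powr (- \<beta> * (real (tau1 - tau1' + 1) + real (tau2 - tau2' + 1)))"
    by (simp add: powr_add[symmetric] algebra_simps)
  finally show ?thesis .
qed

end
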